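(* There exist instances of the multi-agent binary-action contract model (described in the context), with additive reward functions and $n$ agents for every $n$, whose price of equality is $\Omega\left(\frac{\log n}{\log\log n}\right)$.
   Context: Model: principal and agents $A=[n]$; each agent $i$ has a finite action set $T_i$ (pairwise disjoint), $T=\bigsqcup_iT_i$, costs $c_j\ge0$ with $c(S_i)=\sum_{j\in S_i}c_j$; in the binary-action model $|T_i|=1$ for all $i$. Reward $f:2^T\to[0,1]$ monotone, $f(\emptyset)=0$; $f$ is additive if $f(S)=\sum_{a\in S}f(\{a\})$. Contract $\boldsymbol{\alpha}\in[0,1]^A$; agent $i$'s utility $\alpha_if(S)-c(S\cap T_i)$; $S\in\mathsf{NE}(\boldsymbol{\alpha})$ (pure Nash equilibrium) if no agent can gain by changing her own subset of actions. Principal's utility $(1-\sum_i\alpha_i)f(S)$. A contract is equal-pay if all its nonzero entries are equal. The price of equality of an instance is $\dfrac{\max_{\boldsymbol{\alpha},\,S\in\mathsf{NE}(\boldsymbol{\alpha})}(1-\sum_i\alpha_i)f(S)}{\max_{\boldsymbol{\alpha}\text{ equal-pay},\,S\in\mathsf{NE}(\boldsymbol{\alpha})}(1-\sum_i\alpha_i)f(S)}$. *)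

theory Defs
  imports Complex_Main
begin

text \<open>Agents are 0,...,n-1; agent i owns
the single action i, so the action set T is identified with the agent set {..<n}
and a set of taken actions is a subset S of {..<n}.\<close>

definition cost :: "(nat \<Rightarrow> real) \<Rightarrow> nat set \<Rightarrow> real" where
  "cost c S = (\<Sum>j\<in>S. c j)"

definition binary_additive_instance ::
  "nat \<Rightarrow> (nat \<Rightarrow> real) \<Rightarrow> (nat set \<Rightarrow> real) \<Rightarrow> bool" where
  "binary_additive_instance n c f \<longleftrightarrow>
     (\<forall>i<n. 0 \<le> c i) \<and>
     f {} = 0 \<and>
     (\<forall>S. S \<subseteq> {..<n} \<longrightarrow> 0 \<le> f S \<and> f S \<le> 1) \<and>
     (\<forall>S T. S \<subseteq> T \<and> T \<subseteq> {..<n} \<longrightarrow> f S \<le> f T) \<and>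
     (\<forall>S. S \<subseteq> {..<n} \<longrightarrow> f S = (\<Sum>a\<in>S. f {a}))"

definition contract :: "nat \<Rightarrow> (nat \<Rightarrow> real) \<Rightarrow> bool" where
  "contract n \<alpha> \<longleftrightarrow> (\<forall>i<n. 0 \<le> \<alpha> i \<and> \<alpha> i \<le> 1)"

definition equal_pay :: "nat \<Rightarrow> (nat \<Rightarrow> real) \<Rightarrow> bool" where
  "equal_pay n \<alpha> \<longleftrightarrow> (\<forall>i<n. \<forall>j<n. \<alpha> i \<noteq> 0 \<longrightarrow> \<alpha> j \<noteq> 0 \<longrightarrow> \<alpha> i = \<alpha> j)"

definition is_NE ::
  "nat \<Rightarrow> (nat \<Rightarrow> real) \<Rightarrow> (nat set \<Rightarrow> real) \<Rightarrow> (nat \<Rightarrow> real) \<Rightarrow> nat set \<Rightarrow> bool" where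
  "is_NE n c f \<alpha> S \<longleftrightarrow> S \<subseteq> {..<n} \<and>
     (\<forall>i<n. \<forall>X. X \<subseteq> {i} \<longrightarrow>
        \<alpha> i * f ((S - {i}) \<union> X) - cost c X \<le> \<alpha> i * f S - cost c (S \<inter> {i}))"

definition principal_utility :: "nat \<Rightarrow> (nat set \<Rightarrow> real) \<Rightarrow> (nat \<Rightarrow> real) \<Rightarrow> nat set \<Rightarrow> real" where
  "principal_utility n f \<alpha> S = (1 - (\<Sum>i<n. \<alpha> i)) * f S"

definition opt_utility :: "nat \<Rightarrow> (nat \<Rightarrow> real) \<Rightarrow> (nat set \<Rightarrow> real) \<Rightarrow> real" where
  "opt_utility n c f = Sup {principal_utility n f \<alpha> S | \<alpha> S. contract n \<alpha> \<and> is_NE n c f \<alpha> S}"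

definition opt_equal_pay_utility :: "nat \<Rightarrow> (nat \<Rightarrow> real) \<Rightarrow> (nat set \<Rightarrow> real) \<Rightarrow> real" where
  "opt_equal_pay_utility n c f = Sup {principal_utility n f \<alpha> S | \<alpha> S.
      contract n \<alpha> \<and> equal_pay n \<alpha> \<and> is_NE n c f \<alpha> S}"

definition price_of_equality :: "nat \<Rightarrow> (nat \<Rightarrow> real) \<Rightarrow> (nat set \<Rightarrow> real) \<Rightarrow> real" where
  "price_of_equality n c f = opt_utility n c f / opt_equal_pay_utility n c f"

end

theory Submission imports Defs begin

definition DD :: "nat \<Rightarrow> real" where "DD n = (\<Sum>i<n. 1 / real (Suc i))"
definition uu :: "nat \<Rightarrow> nat \<Rightarrow> real" where "uu n i = (1 / real (Suc i)) / DD n"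
definition rr :: "nat \<Rightarrow> nat \<Rightarrow> real" where "rr n i = uu n i / 2"
definition cc :: "nat \<Rightarrow> nat \<Rightarrow> real" where "cc n i = rr n i * uu n i"
definition ff :: "nat \<Rightarrow> nat set \<Rightarrow> real" where "ff n S = (\<Sum>i\<in>S \<inter> {..<n}. uu n i)"

lemma DD_ge1: assumes "1 \<le> n" shows "1 \<le> DD n"
proof -
  have "1 / real (Suc 0) \<le> (\<Sum>i<n. 1 / real (Suc i))"
    by (rule member_le_sum) (use assms in auto)
  then show ?thesis by (simp add: DD_def)
qed

lemma DD_lower: "ln (real n + 1) \<le> DD n"
proof (induction n)
  case 0 then show ?case by (simp add: DD_def)
next
  case (Suc n)
  have "ln (real n + 2) - ln (real n + 1) \<le> ((real n + 2) - (real n + 1)) / (real n + 1)"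
    by (rule ln_diff_le) auto
  then have "ln (real n + 2) \<le> ln (real n + 1) + 1 / (real n + 1)" by simp
  moreover have "DD (Suc n) = DD n + 1 / (real n + 1)" by (simp add: DD_def add.commute)
  ultimately show ?case using Suc by (simp add: add.commute)
qed

lemma DD_upper: assumes "1 \<le> n" shows "DD n \<le> 1 + ln (real n)"
  using assms
proof (induction n rule: dec_induct)
  case base then show ?case by (simp add: DD_def)
next
  case (step n)
  have "ln (real n) - ln (real n + 1) \<le> (real n - (real n + 1)) / (real n + 1)"
    by (rule ln_diff_le) (use step in auto)
  then have "1 / (real n + 1) \<le> ln (real n + 1) - ln (real n)" by (simp add: field_simps)
  moreover have "DD (Suc n) = DD n + 1 / (real n + 1)" by (simp add: DD_def add.commute)
  ultimately show ?case using step by (simp add: add.commute)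
qed

lemma harmA: assumes "1 \<le> m" "m \<le> K"
  shows "(\<Sum>j\<in>{m..K}. 1 / real j) \<le> 1 / real m + ln (real K / real m)"
  using assms(2)
proof (induction K rule: dec_induct)
  case base then show ?case by simp
next
  case (step K)
  have K0: "0 < real K" using step assms by simp
  have "ln (real K) - ln (real K + 1) \<le> (real K - (real K + 1)) / (real K + 1)"
    by (rule ln_diff_le) (use K0 in auto)
  then have A: "1 / (real K + 1) \<le> ln (real K + 1) - ln (real K)" by (simp add: field_simps)
  have m0: "0 < real m" using assms by simp
  have "ln (real (Suc K) / real m) = ln (real K + 1) - ln (real m)" using m0 by (simp add: ln_div)
  moreover have "ln (real K / real m) = ln (real K) - ln (real m)" using m0 K0 by (simp add: ln_div)
  moreover have "(\<Sum>j\<in>{m..Suc K}. 1 / real j) = (\<Sum>j\<in>{m..K}. 1 / real j) + 1 / (real K + 1)"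
    using step by (simp add: sum.cl_ivl_Suc add.commute)
  ultimately show ?case using step A by linarith
qed

lemma DD_pos: "1 \<le> n \<Longrightarrow> 0 < DD n" using DD_ge1[of n] by simp

lemma sum_uu: assumes "1 \<le> n" shows "(\<Sum>i<n. uu n i) = 1"
proof -
  have "(\<Sum>i<n. uu n i) = (\<Sum>i<n. 1 / real (Suc i)) / DD n"
    unfolding uu_def by (rule sum_divide_distrib[symmetric])
  then show ?thesis using DD_pos[OF assms] by (simp add: DD_def)
qed

lemma uu_pos: "1 \<le> n \<Longrightarrow> 0 < uu n i" using DD_pos by (simp add: uu_def)

lemma ff_remove: assumes "i \<in> S" "i < n" shows "ff n S = ff n (S - {i}) + uu n i"
proof -
  have e: "(S - {i}) \<inter> {..<n} = (S \<inter> {..<n}) - {i}" by auto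
  have "(\<Sum>j\<in>S \<inter> {..<n}. uu n j) = uu n i + (\<Sum>j\<in>(S \<inter> {..<n}) - {i}. uu n j)"
    by (rule sum.remove) (use assms in auto)
  then show ?thesis unfolding ff_def e by simp
qed

lemma inst_ok: assumes "1 \<le> n" shows "binary_additive_instance n (cc n) (ff n)"
  unfolding binary_additive_instance_def
proof (intro conjI allI impI)
  fix i assume "i < n" then show "0 \<le> cc n i" using uu_pos[OF assms, of i] by (simp add: cc_def rr_def)
next
  show "ff n {} = 0" by (simp add: ff_def)
next
  fix S :: "nat set" assume "S \<subseteq> {..<n}"
  show "0 \<le> ff n S" unfolding ff_def by (rule sum_nonneg) (use uu_pos[OF assms] less_imp_le in blast)
next
  fix S :: "nat set" assume "S \<subseteq> {..<n}"
  have "ff n S \<le> (\<Sum>i<n. uu n i)" unfolding ff_def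
    by (rule sum_mono2) (use uu_pos[OF assms] less_imp_le in auto)
  then show "ff n S \<le> 1" using sum_uu[OF assms] by simp
next
  fix S T :: "nat set" assume "S \<subseteq> T \<and> T \<subseteq> {..<n}"
  then show "ff n S \<le> ff n T" unfolding ff_def
    by (intro sum_mono2) (use uu_pos[OF assms] less_imp_le in auto)
next
  fix S :: "nat set" assume S: "S \<subseteq> {..<n}"
  then have "S \<inter> {..<n} = S" by auto
  moreover have "\<And>a. a \<in> S \<Longrightarrow> ff n {a} = uu n a" using S by (auto simp: ff_def)
  ultimately show "ff n S = (\<Sum>a\<in>S. ff n {a})" by (simp add: ff_def)
qed


lemma util_le1:
  assumes inst: "binary_additive_instance n c f" and ct: "contract n \<alpha>" and ne: "is_NE n c f \<alpha> S"
  shows "principal_utility n f \<alpha> S \<le> 1"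
proof -
  have S: "S \<subseteq> {..<n}" using ne by (simp add: is_NE_def)
  have f0: "0 \<le> f S" and f1: "f S \<le> 1" using inst S by (auto simp: binary_additive_instance_def)
  have a0: "0 \<le> (\<Sum>i<n. \<alpha> i)" using ct by (intro sum_nonneg) (auto simp: contract_def)
  have "(1 - (\<Sum>i<n. \<alpha> i)) * f S = f S - (\<Sum>i<n. \<alpha> i) * f S" by (simp add: algebra_simps)
  also have "\<dots> \<le> 1" using a0 f0 f1 mult_nonneg_nonneg[OF a0 f0] by linarith
  finally show ?thesis by (simp add: principal_utility_def)
qed

lemma NE_gain: assumes "is_NE n c f \<alpha> S" "i \<in> S"
  shows "\<alpha> i * f (S - {i}) \<le> \<alpha> i * f S - c i"
proof -
  have i: "i < n" using assms by (auto simp: is_NE_def)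
  have "\<alpha> i * f ((S - {i}) \<union> {}) - cost c {} \<le> \<alpha> i * f S - cost c (S \<inter> {i})"
    using assms(1) i unfolding is_NE_def by blast
  moreover have "S \<inter> {i} = {i}" using assms(2) by auto
  ultimately show ?thesis by (simp add: cost_def)
qed

lemma opt_ge: assumes n: "1 \<le> n" shows "1/2 \<le> opt_utility n (cc n) (ff n)"
proof -
  let ?X = "{principal_utility n (ff n) \<alpha> S | \<alpha> S. contract n \<alpha> \<and> is_NE n (cc n) (ff n) \<alpha> S}"
  have bdd: "bdd_above ?X"
    by (rule bdd_aboveI[of _ 1]) (use util_le1[OF inst_ok[OF n]] in blast)
  have D: "0 < DD n" using DD_pos[OF n] .
  have ct: "contract n (rr n)" unfolding contract_def
  proof (intro allI impI conjI)
    fix i assume "i < n"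
    show "0 \<le> rr n i" using uu_pos[OF n, of i] by (simp add: rr_def)
    have "uu n i \<le> (\<Sum>i<n. uu n i)"
      by (rule member_le_sum) (use \<open>i < n\<close> uu_pos[OF n] less_imp_le in auto)
    then show "rr n i \<le> 1" using sum_uu[OF n] by (simp add: rr_def)
  qed
  have ne: "is_NE n (cc n) (ff n) (rr n) {..<n}" unfolding is_NE_def
  proof (intro conjI allI impI)
    fix i X assume i: "i < n" and X: "X \<subseteq> {i}"
    have r: "ff n {..<n} = ff n ({..<n} - {i}) + uu n i" using ff_remove[of i "{..<n}" n] i by simp
    have c: "cost (cc n) {i} = rr n i * uu n i" by (simp add: cost_def cc_def)
    have ii: "{..<n} \<inter> {i} = {i}" using i by auto
    show "rr n i * ff n ({..<n} - {i} \<union> X) - cost (cc n) X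
          \<le> rr n i * ff n {..<n} - cost (cc n) ({..<n} \<inter> {i})"
    proof (cases "X = {}")
      case True then show ?thesis using r c ii by (simp add: cost_def algebra_simps)
    next
      case False
      then have "X = {i}" using X by auto
      moreover have "{..<n} - {i} \<union> {i} = {..<n}" using i by auto
      ultimately show ?thesis using ii by simp
    qed
  qed simp
  have "(\<Sum>i<n. rr n i) = 1/2" using sum_uu[OF n] by (simp add: rr_def sum_divide_distrib[symmetric])
  moreover have "ff n {..<n} = 1" using sum_uu[OF n] by (simp add: ff_def)
  ultimately have "principal_utility n (ff n) (rr n) {..<n} = 1/2" by (simp add: principal_utility_def)
  then have "1/2 \<in> ?X" using ct ne by force
  then show ?thesis unfolding opt_utility_def using bdd by (rule cSup_upper)
qed


lemma eq_pos: assumes n: "1 \<le> n" shows "0 < opt_equal_pay_utility n (cc n) (ff n)"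
proof -
  let ?X = "{principal_utility n (ff n) \<alpha> S | \<alpha> S. contract n \<alpha> \<and> equal_pay n \<alpha> \<and> is_NE n (cc n) (ff n) \<alpha> S}"
  have bdd: "bdd_above ?X"
    by (rule bdd_aboveI[of _ 1]) (use util_le1[OF inst_ok[OF n]] in blast)
  define \<alpha> :: "nat \<Rightarrow> real" where "\<alpha> = (\<lambda>i. if i = 0 then rr n 0 else 0)"
  have u0: "0 < uu n 0" using uu_pos[OF n] .
  have u1: "uu n 0 \<le> 1"
  proof -
    have "uu n 0 \<le> (\<Sum>i<n. uu n i)"
      by (rule member_le_sum) (use n uu_pos[OF n] less_imp_le in auto)
    then show ?thesis using sum_uu[OF n] by simp
  qed
  have ct: "contract n \<alpha>" using u0 u1 by (auto simp: contract_def \<alpha>_def rr_def)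
  have ep: "equal_pay n \<alpha>" by (auto simp: equal_pay_def \<alpha>_def)
  have ne: "is_NE n (cc n) (ff n) \<alpha> {0}" unfolding is_NE_def
  proof (intro conjI allI impI)
    show "{0} \<subseteq> {..<n}" using n by auto
  next
    fix i X assume i: "i < n" and X: "X \<subseteq> {i}"
    have f0: "ff n {0} = uu n 0" using n by (simp add: ff_def)
    show "\<alpha> i * ff n ({0} - {i} \<union> X) - cost (cc n) X \<le> \<alpha> i * ff n {0} - cost (cc n) ({0} \<inter> {i})"
    proof (cases "i = 0")
      case True
      show ?thesis
      proof (cases "X = {}")
        case True then show ?thesis using \<open>i = 0\<close> f0 by (simp add: \<alpha>_def cost_def cc_def ff_def)
      next
        case False then have "X = {0}" using X \<open>i = 0\<close> by auto
        then show ?thesis using \<open>i = 0\<close> f0 by (simp add: \<alpha>_def cost_def cc_def)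
      qed
    next
      case False
      have "0 \<le> cost (cc n) X" unfolding cost_def
        by (rule sum_nonneg) (use X uu_pos[OF n] in \<open>auto simp: cc_def rr_def\<close>)
      then show ?thesis using False by (simp add: \<alpha>_def cost_def)
    qed
  qed
  have s: "(\<Sum>i<n. \<alpha> i) = rr n 0" using n by (simp add: \<alpha>_def)
  have "principal_utility n (ff n) \<alpha> {0} = (1 - rr n 0) * uu n 0"
    using s n by (simp add: principal_utility_def ff_def)
  moreover have "0 < (1 - rr n 0) * uu n 0" using u0 u1 by (simp add: rr_def)
  moreover have "principal_utility n (ff n) \<alpha> {0} \<in> ?X" using ct ep ne by blast
  ultimately show ?thesis unfolding opt_equal_pay_utility_def
    using cSup_upper[OF _ bdd] by force
qed


lemma sumS_bound:
  fixes S :: "nat set" and a D :: real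
  assumes fin: "finite S" and ne: "S \<noteq> {}" and a: "0 < a" and D: "1 \<le> D"
    and sa: "real (card S) * a < 1"
    and low: "\<And>i. i \<in> S \<Longrightarrow> 1 \<le> a * 2 * D * real (Suc i)"
  shows "(\<Sum>i\<in>S. 1 / real (Suc i)) \<le> 2 + ln (2 * D)"
proof -
  define s where "s = card S"
  have s1: "1 \<le> s" using fin ne by (simp add: s_def Suc_le_eq card_gt_0_iff)
  define S1 where "S1 = {i\<in>S. Suc i \<le> s}"
  define S2 where "S2 = {i\<in>S. \<not> Suc i \<le> s}"
  have split: "(\<Sum>i\<in>S. 1 / real (Suc i)) = (\<Sum>i\<in>S1. 1 / real (Suc i)) + (\<Sum>i\<in>S2. 1 / real (Suc i))"
  proof -
    have "S = S1 \<union> S2" "S1 \<inter> S2 = {}" by (auto simp: S1_def S2_def)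
    moreover have "finite S1" "finite S2" using fin by (auto simp: S1_def S2_def)
    ultimately show ?thesis by (metis sum.union_disjoint)
  qed
  have B2: "(\<Sum>i\<in>S2. 1 / real (Suc i)) \<le> 1"
  proof -
    have "(\<Sum>i\<in>S2. 1 / real (Suc i)) \<le> (\<Sum>i\<in>S2. 1 / real s)"
    proof (rule sum_mono)
      fix i assume "i \<in> S2"
      then have "real s \<le> real (Suc i)" by (auto simp: S2_def)
      then show "1 / real (Suc i) \<le> 1 / real s" using s1 by (intro divide_left_mono) auto
    qed
    also have "\<dots> = real (card S2) / real s" by simp
    also have "\<dots> \<le> 1"
    proof -
      have "card S2 \<le> s" unfolding s_def by (rule card_mono[OF fin]) (auto simp: S2_def)
      then show ?thesis using s1 by simp
    qed
    finally show ?thesis .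
  qed
  define \<mu> where "\<mu> = 1 / (2 * a * D)"
  have mu0: "0 < \<mu>" using a D by (simp add: \<mu>_def)
  define m where "m = max 1 (nat \<lceil>\<mu>\<rceil>)"
  have m1: "1 \<le> m" by (simp add: m_def)
  have mmu: "\<mu> \<le> real m"
  proof -
    have "\<mu> \<le> real (nat \<lceil>\<mu>\<rceil>)" by linarith
    also have "\<dots> \<le> real m" by (simp add: m_def)
    finally show ?thesis .
  qed
  have sub: "Suc ` S1 \<subseteq> {m..s}"
  proof
    fix j assume "j \<in> Suc ` S1"
    then obtain i where i: "i \<in> S1" "j = Suc i" by auto
    have "1 \<le> a * 2 * D * real (Suc i)" using low i by (auto simp: S1_def)
    then have "\<mu> \<le> real (Suc i)" using a D by (simp add: \<mu>_def field_simps)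
    then have "nat \<lceil>\<mu>\<rceil> \<le> Suc i" by linarith
    then have "m \<le> Suc i" by (simp add: m_def)
    then show "j \<in> {m..s}" using i by (auto simp: S1_def)
  qed
  have "(\<Sum>i\<in>S1. 1 / real (Suc i)) = (\<Sum>j\<in>Suc ` S1. 1 / real j)"
    by (simp add: sum.reindex)
  also have "\<dots> \<le> (\<Sum>j\<in>{m..s}. 1 / real j)"
    by (rule sum_mono2) (use sub in auto)
  also have "\<dots> \<le> 1 + ln (2 * D)"
  proof (cases "m \<le> s")
    case True
    have "(\<Sum>j\<in>{m..s}. 1 / real j) \<le> 1 / real m + ln (real s / real m)" by (rule harmA[OF m1 True])
    moreover have "1 / real m \<le> 1" using m1 by simp
    moreover have "ln (real s / real m) \<le> ln (2 * D)"
    proof -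
      have "real s / real m \<le> real s / \<mu>" using mu0 mmu s1 by (intro divide_left_mono) auto
      also have "\<dots> = real s * a * 2 * D" by (simp add: \<mu>_def)
      also have "\<dots> \<le> 2 * D" using sa D by (simp add: s_def)
      finally have "real s / real m \<le> 2 * D" .
      moreover have "0 < real s / real m" using s1 m1 by simp
      ultimately show ?thesis by simp
    qed
    ultimately show ?thesis by linarith
  next
    case False
    then have "{m..s} = {}" by auto
    moreover have "0 \<le> ln (2 * D)" using D by simp
    ultimately show ?thesis by simp
  qed
  finally show ?thesis using split B2 by linarith
qed


lemma eq_util_le:
  assumes n: "1 \<le> n" and ct: "contract n \<alpha>" and ep: "equal_pay n \<alpha>"
    and ne: "is_NE n (cc n) (ff n) \<alpha> S"
  shows "principal_utility n (ff n) \<alpha> S \<le> (2 + ln (2 * DD n)) / DD n"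
proof -
  have S: "S \<subseteq> {..<n}" using ne by (simp add: is_NE_def)
  have fin: "finite S" using S finite_subset by blast
  have D1: "1 \<le> DD n" using DD_ge1[OF n] .
  have B0: "0 \<le> (2 + ln (2 * DD n)) / DD n" using D1 by simp
  have f0: "0 \<le> ff n S" using inst_ok[OF n] S unfolding binary_additive_instance_def by blast
  have ffS: "ff n S = (\<Sum>i\<in>S. 1 / real (Suc i)) / DD n"
  proof -
    have "S \<inter> {..<n} = S" using S by auto
    then show ?thesis by (simp add: ff_def uu_def sum_divide_distrib)
  qed
  have key: "rr n i \<le> \<alpha> i" if i: "i \<in> S" for i
  proof -
    have in_: "i < n" using S i by auto
    have "\<alpha> i * ff n (S - {i}) \<le> \<alpha> i * ff n S - cc n i" by (rule NE_gain[OF ne i])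
    then have "cc n i \<le> \<alpha> i * uu n i" using ff_remove[OF i in_] by (simp add: algebra_simps)
    then have "rr n i * uu n i \<le> \<alpha> i * uu n i" by (simp add: cc_def)
    then show ?thesis using uu_pos[OF n, of i] by simp
  qed
  have rpos: "0 < rr n i" for i using uu_pos[OF n, of i] by (simp add: rr_def)
  show ?thesis
  proof (cases "S = {}")
    case True
    then show ?thesis using B0 by (simp add: principal_utility_def ff_def)
  next
    case False
    then obtain i0 where i0: "i0 \<in> S" by auto
    define a where "a = \<alpha> i0"
    have a0: "0 < a" using key[OF i0] rpos[of i0] by (simp add: a_def)
    define P where "P = {i. i < n \<and> \<alpha> i \<noteq> 0}"
    have i0n: "i0 < n" using i0 S by auto
    have Pa: "\<alpha> j = a" if "j \<in> P" for j
      using ep that i0n a0 unfolding equal_pay_def P_def a_def by auto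
    have SP: "S \<subseteq> P"
    proof
      fix i assume "i \<in> S"
      then show "i \<in> P" using key[of i] rpos[of i] S by (auto simp: P_def)
    qed
    have finP: "finite P" by (simp add: P_def)
    have sumP: "(\<Sum>i<n. \<alpha> i) = real (card P) * a"
    proof -
      have "(\<Sum>i<n. \<alpha> i) = (\<Sum>i\<in>P. \<alpha> i)"
        by (rule sum.mono_neutral_right) (auto simp: P_def)
      also have "\<dots> = (\<Sum>i\<in>P. a)" using Pa by simp
      finally show ?thesis by simp
    qed
    show ?thesis
    proof (cases "1 \<le> real (card P) * a")
      case True
      then have "(1 - (\<Sum>i<n. \<alpha> i)) * ff n S \<le> 0" using sumP f0 by (simp add: mult_nonpos_nonneg)
      then show ?thesis using B0 by (simp add: principal_utility_def)
    next
      case False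
      have cS: "card S \<le> card P" by (rule card_mono[OF finP SP])
      have sa: "real (card S) * a < 1"
      proof -
        have "real (card S) * a \<le> real (card P) * a" using cS a0 by simp
        then show ?thesis using False by linarith
      qed
      have low: "1 \<le> a * 2 * DD n * real (Suc i)" if "i \<in> S" for i
      proof -
        have "rr n i \<le> a" using key[OF that] Pa SP that by auto
        then have h: "1 / (real (Suc i) * DD n * 2) \<le> a" by (simp add: rr_def uu_def)
        have p: "0 < real (Suc i) * DD n * 2" using D1 by simp
        have "1 \<le> a * (real (Suc i) * DD n * 2)" using h p by (simp add: divide_le_eq mult.commute)
        then show ?thesis by (simp add: ac_simps)
      qed
      have "(\<Sum>i\<in>S. 1 / real (Suc i)) \<le> 2 + ln (2 * DD n)"
        by (rule sumS_bound[OF fin \<open>S \<noteq> {}\<close> a0 D1 sa low])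
      then have fS: "ff n S \<le> (2 + ln (2 * DD n)) / DD n"
        unfolding ffS using D1 by (simp add: divide_right_mono)
      have "(1 - (\<Sum>i<n. \<alpha> i)) * ff n S \<le> ff n S"
      proof -
        have "0 \<le> (\<Sum>i<n. \<alpha> i)" using sumP a0 by simp
        then show ?thesis using f0 by (simp add: mult_left_le_one_le algebra_simps)
      qed
      then show ?thesis using fS by (simp add: principal_utility_def)
    qed
  qed
qed


lemma final_arith:
  fixes n :: nat and D :: real
  assumes n: "20000 \<le> n" and Dl: "ln (real n) \<le> D" and Du: "D \<le> 1 + ln (real n)"
  shows "1/8 * ln (real n) / ln (ln (real n)) \<le> D / (2 * (2 + ln (2 * D)))"
proof -
  define L where "L = ln (real n)"
  have e3: "exp 1 \<le> (3::real)" by (rule exp_le)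
  have "exp (9::real) = exp 1 ^ 9" using exp_of_nat_mult[of 9 1] by simp
  also have "\<dots> \<le> 3 ^ 9" by (rule power_mono[OF e3]) simp
  also have "\<dots> \<le> real n" using n by simp
  finally have "exp 9 \<le> real n" .
  then have L9: "9 \<le> L" unfolding L_def using n by (subst ln_ge_iff) auto
  have ln3: "1 \<le> ln (3::real)" using e3 by (subst ln_ge_iff) auto
  have "ln (9::real) = ln 3 + ln 3" using ln_mult[of 3 3] by simp
  moreover have "ln 9 \<le> ln L" using L9 by simp
  ultimately have lnL: "2 * ln 3 \<le> ln L" by simp
  have lnLpos: "0 < ln L" using lnL ln3 by simp
  have D0: "0 < D" using Dl L9 L_def by simp
  have "ln (2 * D) \<le> ln (3 * L)" using Du L9 D0 unfolding L_def by simp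
  also have "\<dots> = ln 3 + ln L" using L9 by (simp add: ln_mult)
  finally have "2 + ln (2 * D) \<le> 5/2 * ln L" using lnL ln3 by linarith
  moreover have Q0: "0 < 2 + ln (2 * D)"
  proof -
    have "0 \<le> ln (2 * D)" using D0 Dl L9 L_def by simp
    then show ?thesis by simp
  qed
  ultimately have "L / (5 * ln L) \<le> L / (2 * (2 + ln (2 * D)))"
    using L9 by (intro divide_left_mono) auto
  also have "\<dots> \<le> D / (2 * (2 + ln (2 * D)))"
    using Dl Q0 unfolding L_def by (intro divide_right_mono) auto
  finally have "L / (5 * ln L) \<le> D / (2 * (2 + ln (2 * D)))" .
  moreover have "1/8 * L / ln L \<le> L / (5 * ln L)"
    using lnLpos L9 by (simp add: field_simps)
  ultimately show ?thesis unfolding L_def by linarith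
qed

theorem proposition5p2:
  shows "\<exists>C>0. \<exists>N::nat. \<forall>n\<ge>N. \<exists>c f. binary_additive_instance n c f \<and>
           price_of_equality n c f \<ge> C * ln (real n) / ln (ln (real n))"
proof (intro exI[of _ "1/8"] conjI exI[of _ "20000::nat"] allI impI)
  show "(0::real) < 1/8" by simp
  fix n :: nat assume n: "20000 \<le> n"
  then have n1: "1 \<le> n" by simp
  let ?D = "DD n"
  let ?B = "(2 + ln (2 * ?D)) / ?D"
  let ?X = "{principal_utility n (ff n) \<alpha> S | \<alpha> S. contract n \<alpha> \<and> equal_pay n \<alpha> \<and> is_NE n (cc n) (ff n) \<alpha> S}"
  have D1: "1 \<le> ?D" by (rule DD_ge1[OF n1])
  have eqle: "opt_equal_pay_utility n (cc n) (ff n) \<le> ?B"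
    unfolding opt_equal_pay_utility_def
  proof (rule cSup_least)
    have "principal_utility n (ff n) (\<lambda>_. 0) {} \<in> ?X"
      unfolding contract_def equal_pay_def is_NE_def
    proof (intro CollectI exI conjI allI impI)
      fix i X assume "i < n" "X \<subseteq> {i}"
      have "0 \<le> cost (cc n) X" unfolding cost_def
        by (rule sum_nonneg) (use uu_pos[OF n1] in \<open>auto simp: cc_def rr_def\<close>)
      then show "0 * ff n ({} - {i} \<union> X) - cost (cc n) X \<le> 0 * ff n {} - cost (cc n) ({} \<inter> {i})"
        by (simp add: cost_def)
    qed auto
    then show "?X \<noteq> {}" by blast
  next
    fix x assume "x \<in> ?X"
    then show "x \<le> ?B" using eq_util_le[OF n1] by blast
  qed
  have eq0: "0 < opt_equal_pay_utility n (cc n) (ff n)" by (rule eq_pos[OF n1])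
  have optge: "1/2 \<le> opt_utility n (cc n) (ff n)" by (rule opt_ge[OF n1])
  have B0: "0 < ?B" using eq0 eqle by linarith
  have "(1/2) / ?B \<le> (1/2) / opt_equal_pay_utility n (cc n) (ff n)"
    using eqle mult_pos_pos[OF B0 eq0] by (intro divide_left_mono) auto
  also have "\<dots> \<le> price_of_equality n (cc n) (ff n)"
    unfolding price_of_equality_def using optge eq0 by (intro divide_right_mono) auto
  finally have p: "(1/2) / ?B \<le> price_of_equality n (cc n) (ff n)" .
  have "(1/2) / ?B = ?D / (2 * (2 + ln (2 * ?D)))" by simp
  moreover have "1/8 * ln (real n) / ln (ln (real n)) \<le> ?D / (2 * (2 + ln (2 * ?D)))"
  proof (rule final_arith[OF n])
    have "ln (real n) \<le> ln (real n + 1)" using n1 by simp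
    then show "ln (real n) \<le> ?D" using DD_lower[of n] by linarith
    show "?D \<le> 1 + ln (real n)" by (rule DD_upper[OF n1])
  qed
  ultimately show "\<exists>c f. binary_additive_instance n c f \<and>
           1/8 * ln (real n) / ln (ln (real n)) \<le> price_of_equality n c f"
    using p inst_ok[OF n1] by (intro exI[of _ "cc n"] exI[of _ "ff n"]) auto
qed

end
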